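(* Let $T_1,T_2$ be $2\times2$ matrices with entries in $\{0,1\}$, neither having a zero row, let $\alpha_i=T_1^{(i)}\otimes T_2^{(i)}$ ($i=1,2$), and suppose $|\alpha_1|=|\alpha_2|=\alpha$ with $\alpha\ge 2$ an integer. Suppose moreover that $k_{1,2}=k_{2,2}=:\beta$. Then $$h(T)=\left(\frac{1-\bar\lambda\,\frac{\ln\beta}{\ln\alpha}}{\lambda^2}\right)\ln\alpha .$$ Furthermore, if $k_{1,2}=k_{2,2}=\alpha$, then $h(T)=\frac{\ln\alpha}{\lambda}$.
   Context: $\lambda=\frac{1+\sqrt5}{2}$ and $\bar\lambda=\frac{1-\sqrt5}{2}$. $T_k^{(i)}$ is the $i$-th row of $T_k$, $(v_1,v_2)\otimes(w_1,w_2)=(v_1w_1,v_1w_2,v_2w_1,v_2w_2)$, and $|\alpha_i|$ is the number of ones in $\alpha_i$. Define $\gamma^{[s_j]}_{i,n}$ ($i,j\in\{1,2\}$, $n\ge0$) by $\gamma^{[s_j]}_{i,0}=1$ and for $n\ge1$ $$\gamma^{[s_1]}_{i,n}=\sum_{j,k=1}^2T_1(i,j)T_2(i,k)\,\gamma^{[s_1]}_{j,n-1}\gamma^{[s_2]}_{k,n-1},\qquad \gamma^{[s_2]}_{i,n}=\sum_{j=1}^2T_1(i,j)\,\gamma^{[s_1]}_{j,n-1}.$$ $k_{i,2}$ is the number of distinct terms in the expression for $\gamma^{[s_2]}_{i,n}$, i.e. the number of $j\in\{1,2\}$ with $T_1(i,j)=1$. Let $l_0=1$, $l_1=2$, $l_{k+1}=l_k+l_{k-1}$,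 $|E_n|=\sum_{k=0}^nl_k$ (number of elements of word length $\le n$ in $G=\langle s_1,s_2\mid s_2s_2=s_2\rangle$), and $h(T)=\limsup_{n\to\infty}\frac{\ln(\gamma^{[s_1]}_{1,n}+\gamma^{[s_1]}_{2,n})}{|E_n|}$ (the paper's entropy of the $G$-vertex shift defined by $T=(T_1,T_2)$). *)

theory Defs
  imports Complex_Main "HOL-Library.Extended_Real" "HOL-Library.Liminf_Limsup"
begin

text \<open>2x2 matrices are functions nat => nat => nat, indices ranging over {1,2}.\<close>

definition lam :: real where "lam = (1 + sqrt 5) / 2"
definition lam_bar :: real where "lam_bar = (1 - sqrt 5) / 2"

fun gam :: "(nat \<Rightarrow> nat \<Rightarrow> nat) \<Rightarrow> (nat \<Rightarrow> nat \<Rightarrow> nat) \<Rightarrow> nat \<Rightarrow> (nat \<Rightarrow> nat) \<times> (nat \<Rightarrow> nat)" where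
  "gam T1 T2 0 = (\<lambda>i. 1, \<lambda>i. 1)"
| "gam T1 T2 (Suc n) =
     (\<lambda>i. \<Sum>j\<in>{1,2}. \<Sum>k\<in>{1,2}. T1 i j * T2 i k * fst (gam T1 T2 n) j * snd (gam T1 T2 n) k,
      \<lambda>i. \<Sum>j\<in>{1,2}. T1 i j * fst (gam T1 T2 n) j)"

definition gamma1 :: "(nat \<Rightarrow> nat \<Rightarrow> nat) \<Rightarrow> (nat \<Rightarrow> nat \<Rightarrow> nat) \<Rightarrow> nat \<Rightarrow> nat \<Rightarrow> nat" where
  "gamma1 T1 T2 i n = fst (gam T1 T2 n) i"
definition gamma2 :: "(nat \<Rightarrow> nat \<Rightarrow> nat) \<Rightarrow> (nat \<Rightarrow> nat \<Rightarrow> nat) \<Rightarrow> nat \<Rightarrow> nat \<Rightarrow> nat" where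
  "gamma2 T1 T2 i n = snd (gam T1 T2 n) i"

fun ll :: "nat \<Rightarrow> nat" where
  "ll 0 = 1"
| "ll (Suc 0) = 2"
| "ll (Suc (Suc k)) = ll (Suc k) + ll k"

definition E_card :: "nat \<Rightarrow> nat" where
  "E_card n = (\<Sum>k\<le>n. ll k)"

definition entropy :: "(nat \<Rightarrow> nat \<Rightarrow> nat) \<Rightarrow> (nat \<Rightarrow> nat \<Rightarrow> nat) \<Rightarrow> ereal" where
  "entropy T1 T2 = limsup (\<lambda>n. ereal (ln (real (gamma1 T1 T2 1 n + gamma1 T1 T2 2 n) ) / real (E_card n)))"

definition alpha_ones :: "(nat \<Rightarrow> nat \<Rightarrow> nat) \<Rightarrow> (nat \<Rightarrow> nat \<Rightarrow> nat) \<Rightarrow> nat \<Rightarrow> nat" where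
  "alpha_ones T1 T2 i = card {(j,k). j \<in> {1,2} \<and> k \<in> {1,2} \<and> T1 i j * T2 i k = 1}"

definition k2 :: "(nat \<Rightarrow> nat \<Rightarrow> nat) \<Rightarrow> nat \<Rightarrow> nat" where
  "k2 T1 i = card {j \<in> {1,2}. T1 i j = 1}"

end

theory Submission
  imports Defs "HOL-Library.Extended_Real" "HOL-Library.Liminf_Limsup"
begin


lemma card_row:
  fixes f :: "nat \<Rightarrow> nat"
  assumes "f 1 \<in> {0,1}" "f 2 \<in> {0,1}"
  shows "card {j \<in> {1,2}. f j = 1} = f 1 + f 2"
proof -
  have "{j \<in> {1,2::nat}. f j = 1} = (if f 1 = 1 then {1} else {}) \<union> (if f 2 = 1 then {2} else {})"
    by auto
  then show ?thesis using assms by auto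
qed

lemma card_prod:
  fixes f g :: "nat \<Rightarrow> nat"
  assumes "f 1 \<in> {0,1}" "f 2 \<in> {0,1}" "g 1 \<in> {0,1}" "g 2 \<in> {0,1}"
  shows "card {(j,k). j \<in> {1,2} \<and> k \<in> {1,2} \<and> f j * g k = 1} = (f 1 + f 2) * (g 1 + g 2)"
proof -
  have "{(j,k). j \<in> {1,2::nat} \<and> k \<in> {1,2::nat} \<and> f j * g k = 1} = {j \<in> {1,2}. f j = 1} \<times> {k \<in> {1,2}. g k = 1}"
    by auto
  then show ?thesis using card_row[OF assms(1,2)] card_row[OF assms(3,4)] by (simp add: card_cartesian_product)
qed

fun xy :: "nat \<Rightarrow> nat \<Rightarrow> nat \<Rightarrow> nat \<times> nat" where
  "xy a b 0 = (1,1)"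
| "xy a b (Suc n) = (a * fst (xy a b n) * snd (xy a b n), b * fst (xy a b n))"

lemma gam_const:
  assumes rows: "\<And>i. i\<in>{1,2} \<Longrightarrow> T1 i 1 + T1 i 2 = b \<and> (T1 i 1 + T1 i 2) * (T2 i 1 + T2 i 2) = a"
  shows "i \<in> {1,2} \<Longrightarrow> fst (gam T1 T2 n) i = fst (xy a b n) \<and> snd (gam T1 T2 n) i = snd (xy a b n)"
proof (induction n arbitrary: i)
  case 0
  then show ?case by simp
next
  case (Suc n)
  define X where "X = fst (xy a b n)"
  define Y where "Y = snd (xy a b n)"
  have h1: "fst (gam T1 T2 n) j = X" "snd (gam T1 T2 n) j = Y" if "j \<in> {1,2}" for j
    using Suc.IH[OF that] X_def Y_def by auto
  have "fst (gam T1 T2 (Suc n)) i = (T1 i 1 + T1 i 2) * (T2 i 1 + T2 i 2) * X * Y"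
    by (simp add: h1 algebra_simps)
  also have "\<dots> = a * X * Y" using rows[OF Suc.prems] by (metis)
  finally have A: "fst (gam T1 T2 (Suc n)) i = fst (xy a b (Suc n))" by (simp add: X_def Y_def)
  have "snd (gam T1 T2 (Suc n)) i = (T1 i 1 + T1 i 2) * X"
    by (simp add: h1 algebra_simps)
  also have "\<dots> = b * X" using rows[OF Suc.prems] by (metis)
  finally have B: "snd (gam T1 T2 (Suc n)) i = snd (xy a b (Suc n))" by (simp add: X_def)
  show ?case using A B by simp
qed

lemma xy_pos: "a \<ge> 1 \<Longrightarrow> b \<ge> 1 \<Longrightarrow> fst (xy a b n) \<ge> 1 \<and> snd (xy a b n) \<ge> 1"
  by (induction n) auto

lemma E_card_ll: "E_card n + 2 = ll (n+2)"
proof (induction n)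
  case 0 then show ?case by (simp add: E_card_def numeral_eq_Suc)
next
  case (Suc n)
  have "E_card (Suc n) + 2 = E_card n + 2 + ll (Suc n)" by (simp add: E_card_def)
  also have "\<dots> = ll (Suc (Suc (Suc n)))" using Suc by simp
  finally show ?case by simp
qed



lemma lam_facts: "lam^2 = lam + 1" "lam_bar^2 = lam_bar + 1" "lam - lam_bar = sqrt 5"
  "lam * lam_bar = -1" "lam > 1" "\<bar>lam_bar\<bar> < 1" "lam_bar = 1 - lam"
proof -
  have s: "sqrt 5 * sqrt 5 = 5" by simp
  have s2: "sqrt 5 > 2" by (rule real_less_rsqrt) simp
  have s3: "sqrt 5 < 3" by (rule real_sqrt_less_mono[where y=9, simplified]) simp
  show "lam^2 = lam + 1" "lam_bar^2 = lam_bar + 1" "lam - lam_bar = sqrt 5"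
    "lam * lam_bar = -1" "lam_bar = 1 - lam"
    unfolding lam_def lam_bar_def power2_eq_square by (simp_all add: field_simps s)
  show "lam > 1" "\<bar>lam_bar\<bar> < 1" unfolding lam_def lam_bar_def using s2 s3 by auto
qed

lemma fib_closed:
  fixes u :: "nat \<Rightarrow> real"
  assumes rec: "\<And>n. u (Suc (Suc n)) = u (Suc n) + u n"
  shows "u n = (u 1 - lam_bar * u 0)/(lam - lam_bar) * lam^n + (lam * u 0 - u 1)/(lam - lam_bar) * lam_bar^n"
proof -
  define A where "A = (u 1 - lam_bar * u 0)/(lam - lam_bar)"
  define B where "B = (lam * u 0 - u 1)/(lam - lam_bar)"
  have d: "lam - lam_bar \<noteq> 0" using lam_facts(3) by simp
  have "u n = A * lam^n + B * lam_bar^n \<and> u (Suc n) = A * lam^(Suc n) + B * lam_bar^(Suc n)"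
  proof (induction n)
    case 0
    have "A + B = ((u 1 - lam_bar*u 0) + (lam*u 0 - u 1))/(lam-lam_bar)"
      unfolding A_def B_def by (simp only: add_divide_distrib[symmetric])
    also have "\<dots> = u 0 * (lam-lam_bar)/(lam-lam_bar)" by (simp add: algebra_simps)
    finally have 1: "A + B = u 0" using d by simp
    have "A * lam + B * lam_bar = ((u 1 - lam_bar*u 0)*lam + (lam*u 0 - u 1)*lam_bar)/(lam-lam_bar)"
      unfolding A_def B_def by (simp only: add_divide_distrib[symmetric] times_divide_eq_left)
    also have "\<dots> = u 1 * (lam-lam_bar)/(lam-lam_bar)" by (simp add: algebra_simps)
    finally have 2: "A * lam + B * lam_bar = u 1" using d by simp
    show ?case using 1 2 by simp
  next
    case (Suc n)
    have "u (Suc (Suc n)) = A * lam^(Suc n) + B * lam_bar^(Suc n) + (A * lam^n + B * lam_bar^n)"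
      using Suc rec by simp
    also have "\<dots> = A * lam^n * (lam + 1) + B * lam_bar^n * (lam_bar + 1)"
      by (simp add: algebra_simps)
    also have "\<dots> = A * lam^(Suc (Suc n)) + B * lam_bar^(Suc (Suc n))"
      unfolding lam_facts(1,2)[symmetric] by (simp add: power2_eq_square algebra_simps)
    finally show ?case using Suc by simp
  qed
  then show ?thesis unfolding A_def B_def by simp
qed



lemma div_div_cancel: "(p::real) \<noteq> 0 \<Longrightarrow> (x/p)/(y/p) = x/y"
  by (cases "y = 0") (auto simp: field_simps)

lemma main_limit:
  fixes a b :: nat
  assumes a1: "a \<ge> 2" and b1: "b \<ge> 1"
  shows "(\<lambda>n. ln (real (2 * fst (xy a b n))) / real (E_card n)) \<longlonglongrightarrow>
           (ln (real a) - lam_bar * ln (real b)) / lam^2"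
proof -
  define x where "x n = real (fst (xy a b n))" for n
  define la where "la = ln (real a)"
  define lb where "lb = ln (real b)"
  have xpos: "x n > 0" for n using xy_pos[of a b n] a1 b1 unfolding x_def by simp
  define Z where "Z n = ln (x n) + la + lb" for n
  have x2: "x (Suc (Suc n)) = real a * x (Suc n) * (real b * x n)" for n
    unfolding x_def by simp
  have Zrec: "Z (Suc (Suc n)) = Z (Suc n) + Z n" for n
  proof -
    have "ln (x (Suc (Suc n))) = la + ln (x (Suc n)) + (lb + ln (x n))"
      unfolding x2 la_def lb_def using xpos[of n] xpos[of "Suc n"] a1 b1
      by (simp add: ln_mult)
    then show ?thesis unfolding Z_def by simp
  qed
  have Z0: "Z 0 = la + lb" unfolding Z_def x_def by simp
  have Z1: "Z 1 = 2 * la + lb" unfolding Z_def x_def la_def by simp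
  define A where "A = (Z 1 - lam_bar * Z 0)/(lam - lam_bar)"
  define B where "B = (lam * Z 0 - Z 1)/(lam - lam_bar)"
  have Zc: "Z n = A * lam^n + B * lam_bar^n" for n
    using fib_closed[of Z n, OF Zrec] unfolding A_def B_def by simp
  define L where "L n = real (ll n)" for n
  have Lrec: "L (Suc (Suc n)) = L (Suc n) + L n" for n unfolding L_def by simp
  define A' where "A' = (L 1 - lam_bar * L 0)/(lam - lam_bar)"
  define B' where "B' = (lam * L 0 - L 1)/(lam - lam_bar)"
  have Lc: "L n = A' * lam^n + B' * lam_bar^n" for n
    using fib_closed[of L n, OF Lrec] unfolding A'_def B'_def by simp
  have E: "real (E_card n) = L (n+2) - 2" for n
  proof -
    have "real (E_card n) + 2 = L (n+2)" using E_card_ll[of n] unfolding L_def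
      by (metis of_nat_add of_nat_numeral)
    then show ?thesis by simp
  qed
  define c where "c = ln 2 - la - lb"
  have lnx: "ln (real (2 * fst (xy a b n))) = c + Z n" for n
    unfolding c_def Z_def x_def using xpos[of n] unfolding x_def by (simp add: ln_mult)
  have lampos: "lam > 0" using lam_facts(5) by simp
  define r where "r = 1 / lam"
  define q where "q = lam_bar / lam"
  have rl: "\<bar>r\<bar> < 1" unfolding r_def using lam_facts(5) by simp
  have ql: "\<bar>q\<bar> < 1"
  proof -
    have "\<bar>q\<bar> = \<bar>lam_bar\<bar> / lam" unfolding q_def using lampos by simp
    also have "\<dots> < 1" using lam_facts(5,6) lampos by simp
    finally show ?thesis .
  qed
  define g where "g n = (c * r^n + A + B * q^n) / (A' * lam^2 + B' * lam_bar^2 * q^n - 2 * r^n)" for n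
  have fg: "ln (real (2 * fst (xy a b n))) / real (E_card n) = g n" for n
  proof -
    have p: "lam^n > 0" using lampos by simp
    have "ln (real (2 * fst (xy a b n))) / real (E_card n)
        = (c + A * lam^n + B * lam_bar^n) / (A' * (lam^n * lam^2) + B' * (lam_bar^n * lam_bar^2) - 2)"
      by (simp only: lnx E Zc Lc power_add add.assoc)
    also have "\<dots> = ((c + A * lam^n + B * lam_bar^n) / lam^n) / ((A' * (lam^n * lam^2) + B' * (lam_bar^n * lam_bar^2) - 2) / lam^n)"
      using p lampos by (intro div_div_cancel[symmetric]) simp
    also have "(c + A * lam^n + B * lam_bar^n) / lam^n = c * r^n + A + B * q^n"
      unfolding r_def q_def power_divide using less_imp_neq[OF p, symmetric]
      by (simp add: add_divide_distrib diff_divide_distrib)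
    also have "(A' * (lam^n * lam^2) + B' * (lam_bar^n * lam_bar^2) - 2) / lam^n = A' * lam^2 + B' * lam_bar^2 * q^n - 2 * r^n"
      unfolding r_def q_def power_divide using less_imp_neq[OF p, symmetric]
      by (simp add: add_divide_distrib diff_divide_distrib)
    finally show ?thesis unfolding g_def .
  qed
  have d: "lam - lam_bar > 0" using lam_facts(3) by simp
  have A'pos: "A' > 0"
  proof -
    have "A' = (2 - lam_bar)/(lam - lam_bar)" unfolding A'_def L_def by simp
    moreover have "2 - lam_bar > 0" using lam_facts(6) by linarith
    ultimately show ?thesis using d by simp
  qed
  have lim: "g \<longlonglongrightarrow> (c * 0 + A + B * 0) / (A' * lam^2 + B' * lam_bar^2 * 0 - 2 * 0)"
  proof -
    have t1: "(\<lambda>n. r^n) \<longlonglongrightarrow> 0" by (rule LIMSEQ_power_zero) (use rl in simp)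
    have t2: "(\<lambda>n. q^n) \<longlonglongrightarrow> 0" by (rule LIMSEQ_power_zero) (use ql in simp)
    have num: "(\<lambda>n. c * r^n + A + B * q^n) \<longlonglongrightarrow> c * 0 + A + B * 0"
      by (intro tendsto_add tendsto_mult tendsto_const t1 t2)
    have den: "(\<lambda>n. A' * lam^2 + B' * lam_bar^2 * q^n - 2 * r^n) \<longlonglongrightarrow> A' * lam^2 + B' * lam_bar^2 * 0 - 2 * 0"
      by (intro tendsto_add tendsto_diff tendsto_mult tendsto_const t1 t2)
    have nz: "A' * lam^2 + B' * lam_bar^2 * 0 - 2 * 0 \<noteq> 0" using A'pos lampos by simp
    show ?thesis unfolding g_def by (rule tendsto_divide[OF num den nz])
  qed
  have val: "(c * 0 + A + B * 0) / (A' * lam^2 + B' * lam_bar^2 * 0 - 2 * 0) = (la - lam_bar * lb) / lam^2"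
  proof -
    have A'v: "A' = (2 - lam_bar)/(lam - lam_bar)" unfolding A'_def L_def by simp
    have Av: "A = (2 * la + lb - lam_bar * (la + lb))/(lam - lam_bar)" unfolding A_def Z0 Z1 by simp
    have m: "lam_bar * lam_bar = lam_bar + 1" using lam_facts(2) by (simp add: power2_eq_square)
    have "(2 - lam_bar) * (la - lam_bar * lb) = 2*la - lam_bar*la - 2*lam_bar*lb + (lam_bar*lam_bar)*lb"
      by (simp add: algebra_simps)
    also have "\<dots> = 2 * la + lb - lam_bar * (la + lb)" unfolding m by (simp add: algebra_simps)
    finally have "2 * la + lb - lam_bar * (la + lb) = (2 - lam_bar) * (la - lam_bar * lb)" by simp
    then have "A = A' * (la - lam_bar * lb)" unfolding A'v Av by simp
    then show ?thesis using A'pos lampos by simp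
  qed
  show ?thesis using lim unfolding val fg[symmetric] la_def lb_def .
qed


theorem theorem3:
  fixes T1 T2 :: "nat \<Rightarrow> nat \<Rightarrow> nat" and a b :: nat
  assumes "\<forall>i\<in>{1,2}. \<forall>j\<in>{1,2}. T1 i j \<in> {0,1} \<and> T2 i j \<in> {0,1}"
    and "\<forall>i\<in>{1,2}. \<exists>j\<in>{1,2}. T1 i j \<noteq> 0"
    and "\<forall>i\<in>{1,2}. \<exists>j\<in>{1,2}. T2 i j \<noteq> 0"
    and "alpha_ones T1 T2 1 = a" and "alpha_ones T1 T2 2 = a" and "a \<ge> 2"
    and "k2 T1 1 = b" and "k2 T1 2 = b"
  shows "entropy T1 T2 = ereal ((1 - lam_bar * (ln (real b) / ln (real a))) / lam\<^sup>2 * ln (real a))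
         \<and> (b = a \<longrightarrow> entropy T1 T2 = ereal (ln (real a) / lam))"
proof -
  have rows: "T1 i 1 + T1 i 2 = b \<and> (T1 i 1 + T1 i 2) * (T2 i 1 + T2 i 2) = a" if i: "i \<in> {1,2}" for i
  proof -
    have e: "T1 i 1 \<in> {0,1}" "T1 i 2 \<in> {0,1}" "T2 i 1 \<in> {0,1}" "T2 i 2 \<in> {0,1}"
      using assms(1) i by auto
    have "k2 T1 i = b" "alpha_ones T1 T2 i = a" using i assms(4,5,7,8) by auto
    then show ?thesis unfolding k2_def alpha_ones_def
      using card_row[of "T1 i", OF e(1,2)] card_prod[of "T1 i" "T2 i", OF e] by simp
  qed
  have b1: "b \<ge> 1"
  proof -
    obtain j where "j \<in> {1,2}" "T1 1 j \<noteq> 0" using assms(2) by auto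
    then have "T1 1 1 + T1 1 2 \<ge> 1" by auto
    then show ?thesis using rows[of 1] by simp
  qed
  have g: "gamma1 T1 T2 1 n + gamma1 T1 T2 2 n = 2 * fst (xy a b n)" for n
    using gam_const[of T1 b T2 a, OF rows, of 1 n] gam_const[of T1 b T2 a, OF rows, of 2 n]
    unfolding gamma1_def by simp
  define L where "L = (ln (real a) - lam_bar * ln (real b)) / lam^2"
  have lim: "(\<lambda>n. ln (real (gamma1 T1 T2 1 n + gamma1 T1 T2 2 n)) / real (E_card n)) \<longlonglongrightarrow> L"
    unfolding g L_def by (rule main_limit[OF assms(6) b1])
  have ent: "entropy T1 T2 = ereal L"
    unfolding entropy_def by (rule lim_imp_Limsup[OF _ tendsto_ereal[OF lim]]) simp
  have la: "ln (real a) > 0" using assms(6) by simp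
  have v1: "(1 - lam_bar * (ln (real b) / ln (real a))) / lam\<^sup>2 * ln (real a) = L"
  proof -
    have "(1 - lam_bar * (ln (real b) / ln (real a))) * ln (real a) = ln (real a) - lam_bar * ln (real b)"
      using la by (simp add: algebra_simps)
    then show ?thesis unfolding L_def by (metis times_divide_eq_left mult.commute)
  qed
  have v2: "ln (real a) / lam = L" if "b = a"
  proof -
    have l2: "lam^2 = lam * lam" by (simp add: power2_eq_square)
    have lp: "lam > 0" using lam_facts(5) by simp
    have "L = ln (real a) * (1 - lam_bar) / lam^2" unfolding L_def that by (simp add: algebra_simps)
    also have "\<dots> = ln (real a) * lam / (lam * lam)" unfolding l2 lam_facts(7) by simp
    also have "\<dots> = ln (real a) / lam" using lp by simp
    finally show ?thesis by simp
  qed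
  show ?thesis using ent v1 v2 by simp
qed

end
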